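(* Let $d$ be a positive integer, $b\geqslant5$ an integer and $a>0$ real with $\zeta=\log_b a\notin\mathbb{Q}$. Define $f:\mathbb{T}^d\to\mathbb{T}^d$ by $f(x)_i=\{\zeta+\sum_{j=1}^{i}\binom{i}{j}x_j\}$, $i=1,\dots,d$. Call the subsets $\{x\in\mathbb{T}^d: x_d=\log_b t\}$, $t\in\{1,\dots,b-1\}$ (i.e. $x_d\in\{0,\log_b2,\dots,\log_b(b-1)\}$), the critical subsets, and for $x\in\mathbb{T}^d$ let $I_x=\{k\in\mathbb{Z}: f^k(x)\text{ lies in a critical subset}\}$. Then: (i) for every finite set $I\subset\mathbb{Z}$ with $\#I=d$, the set of $x\in\mathbb{T}^d$ with $I\subseteq I_x$ is finite; (ii) there is a constant $C$ depending only on $d,a,b$ such that if $\#I_x>d$ then $\max_{k\in I_x}k-\min_{k\in I_x}k\leqslant C$.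
   Context: $\mathbb{T}^d=\mathbb{R}^d/\mathbb{Z}^d$ identified with $[0,1)^d$; $\{y\}$ is the fractional part; $f$ is a homeomorphism so $f^k$ is defined for all $k\in\mathbb{Z}$. *)

theory Defs
  imports Complex_Main
begin

text \<open>Points of the torus T^d are represented as functions nat => real, with
  coordinates indexed by 1..d taking values in [0,1), and value 0 elsewhere.\<close>

definition torus :: "nat \<Rightarrow> (nat \<Rightarrow> real) set" where
  "torus d = {x. (\<forall>i\<in>{1..d}. 0 \<le> x i \<and> x i < 1) \<and> (\<forall>i. i \<notin> {1..d} \<longrightarrow> x i = 0)}"

definition fmap :: "nat \<Rightarrow> real \<Rightarrow> (nat \<Rightarrow> real) \<Rightarrow> (nat \<Rightarrow> real)" where
  "fmap d \<zeta> x = (\<lambda>i. if i \<in> {1..d}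
      then frac (\<zeta> + (\<Sum>j=1..i. real (i choose j) * x j)) else 0)"

text \<open>Integer iterates f^k (f is a bijection of the torus; negative iterates use its inverse).\<close>
definition fiter :: "nat \<Rightarrow> real \<Rightarrow> int \<Rightarrow> (nat \<Rightarrow> real) \<Rightarrow> (nat \<Rightarrow> real)" where
  "fiter d \<zeta> k = (if 0 \<le> k then fmap d \<zeta> ^^ nat k
      else inv_into (torus d) (fmap d \<zeta>) ^^ nat (- k))"

definition critical :: "nat \<Rightarrow> nat \<Rightarrow> (nat \<Rightarrow> real) set" where
  "critical d b = {x \<in> torus d. \<exists>t\<in>{1..b-1}. x d = log (real b) (real t)}"

definition Ix :: "nat \<Rightarrow> real \<Rightarrow> nat \<Rightarrow> (nat \<Rightarrow> real) \<Rightarrow> int set" where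
  "Ix d \<zeta> b x = {k. fiter d \<zeta> k x \<in> critical d b}"

end

theory Submission imports Defs "HOL-Computational_Algebra.Primes" "HOL-Computational_Algebra.Polynomial" "HOL-Library.FuncSet"
begin

definition GG :: "real \<Rightarrow> (nat \<Rightarrow> real) \<Rightarrow> real \<Rightarrow> nat \<Rightarrow> real" where
 "GG z x k i = z * k^i + (\<Sum>j=1..i. real (i choose j) * k^(i-j) * x j)"

lemma binom_part:
  fixes k :: real
  shows "(\<Sum>j=l..i. real (i choose j) * real (j choose l) * k^(j-l)) = real (i choose l) * (k+1)^(i-l)"
proof (cases "l \<le> i")
  case True
  have "(\<Sum>j=l..i. real (i choose j) * real (j choose l) * k^(j-l))
      = (\<Sum>j=l..i. real (i choose l) * (real ((i-l) choose (j-l)) * k^(j-l)))"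
  proof (rule sum.cong[OF refl])
    fix j assume "j \<in> {l..i}"
    then have "(i choose j) * (j choose l) = (i choose l) * ((i - l) choose (j - l))"
      using choose_mult[of l j i] by auto
    then have "real (i choose j) * real (j choose l) = real (i choose l) * real ((i - l) choose (j - l))"
      by (metis of_nat_mult)
    then show "real (i choose j) * real (j choose l) * k^(j-l) = real (i choose l) * (real ((i-l) choose (j-l)) * k^(j-l))"
      by (simp add: algebra_simps)
  qed
  also have "\<dots> = real (i choose l) * (\<Sum>j=l..i. real ((i-l) choose (j-l)) * k^(j-l))"
    by (simp add: sum_distrib_left)
  also have "(\<Sum>j=l..i. real ((i-l) choose (j-l)) * k^(j-l)) = (\<Sum>m=0..i-l. real ((i-l) choose m) * k^m)"
  proof -
    have "(\<Sum>m=0..i-l. real ((i-l) choose m) * k^m) = (\<Sum>j=0+l..(i-l)+l. real ((i-l) choose (j-l)) * k^(j-l))"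
      by (subst sum.shift_bounds_cl_nat_ivl) simp
    then show ?thesis using True by simp
  qed
  also have "\<dots> = (k+1)^(i-l)"
    using binomial_ring[of k 1 "i-l"] by (simp add: atLeast0AtMost mult.commute)
  finally show ?thesis .
next
  case False
  then show ?thesis by simp
qed

lemma GG_step: "z + (\<Sum>j=1..i. real (i choose j) * GG z x k j) = GG z x (k+1) i"
proof -
  have zpart: "z + (\<Sum>j=1..i. real (i choose j) * (z * k^j)) = z * (k+1)^i"
  proof -
    have "(k+1)^i = (\<Sum>j=0..i. real (i choose j) * k^j)"
      using binomial_ring[of k 1 i] by (simp add: atLeast0AtMost)
    also have "\<dots> = 1 + (\<Sum>j=1..i. real (i choose j) * k^j)"
      by (simp add: sum.atLeast_Suc_atMost)
    finally show ?thesis by (simp add: sum_distrib_left algebra_simps)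
  qed
  have xpart: "(\<Sum>j=1..i. real (i choose j) * (\<Sum>l=1..j. real (j choose l) * k^(j-l) * x l))
     = (\<Sum>l=1..i. real (i choose l) * (k+1)^(i-l) * x l)"
  proof -
    have "(\<Sum>j=1..i. real (i choose j) * (\<Sum>l=1..j. real (j choose l) * k^(j-l) * x l))
      = (\<Sum>j\<in>{1..i}. \<Sum>l\<in>{l\<in>{1..i}. l \<le> j}. real (i choose j) * real (j choose l) * k^(j-l) * x l)"
      by (rule sum.cong[OF refl]) (auto simp: sum_distrib_left algebra_simps intro!: sum.cong)
    also have "\<dots> = (\<Sum>l\<in>{1..i}. \<Sum>j\<in>{j\<in>{1..i}. l \<le> j}. real (i choose j) * real (j choose l) * k^(j-l) * x l)"
      by (rule sum.swap_restrict) auto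
    also have "\<dots> = (\<Sum>l\<in>{1..i}. (\<Sum>j=l..i. real (i choose j) * real (j choose l) * k^(j-l)) * x l)"
      by (rule sum.cong[OF refl]) (auto simp: sum_distrib_right intro!: sum.cong)
    also have "\<dots> = (\<Sum>l=1..i. real (i choose l) * (k+1)^(i-l) * x l)"
      by (simp add: binom_part)
    finally show ?thesis .
  qed
  have "z + (\<Sum>j=1..i. real (i choose j) * GG z x k j)
     = (z + (\<Sum>j=1..i. real (i choose j) * (z * k^j))) + (\<Sum>j=1..i. real (i choose j) * (\<Sum>l=1..j. real (j choose l) * k^(j-l) * x l))"
    by (simp add: GG_def distrib_left sum.distrib)
  also have "\<dots> = GG z x (k+1) i"
    by (simp only: zpart xpart GG_def)
  finally show ?thesis .
qed


definition gg :: "nat \<Rightarrow> real \<Rightarrow> real \<Rightarrow> (nat \<Rightarrow> real) \<Rightarrow> (nat \<Rightarrow> real)" where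
 "gg d z k x = (\<lambda>i. if i \<in> {1..d} then frac (GG z x k i) else 0)"

lemma gg_torus: "gg d z k x \<in> torus d"
  by (auto simp: gg_def torus_def frac_lt_1)

lemma GG_0: "i \<ge> 1 \<Longrightarrow> GG z x 0 i = x i"
proof -
  assume i: "i \<ge> 1"
  have "(\<Sum>j=1..i. real (i choose j) * (0::real)^(i-j) * x j) = (\<Sum>j\<in>{i}. real (i choose j) * (0::real)^(i-j) * x j)"
    by (rule sum.mono_neutral_right) (use i in auto)
  then show ?thesis using i by (simp add: GG_def)
qed

lemma gg_0: "x \<in> torus d \<Longrightarrow> gg d z 0 x = x"
  by (auto simp: gg_def torus_def GG_0 fun_eq_iff)

lemma frac_sum_int:
  fixes c :: "nat \<Rightarrow> real"
  shows "frac (z + (\<Sum>j\<in>A. real (n j) * frac (c j))) = frac (z + (\<Sum>j\<in>A. real (n j) * c j))"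
proof -
  have "z + (\<Sum>j\<in>A. real (n j) * c j) = (z + (\<Sum>j\<in>A. real (n j) * frac (c j))) + (\<Sum>j\<in>A. real (n j) * of_int (floor (c j)))"
    by (simp add: frac_def sum.distrib[symmetric] algebra_simps sum_subtractf)
  moreover have "(\<Sum>j\<in>A. real (n j) * of_int (floor (c j))) \<in> \<int>"
    by (intro Ints_sum Ints_mult) auto
  ultimately show ?thesis by (metis frac_add_int_right)
qed

lemma fmap_gg: "fmap d z (gg d z k x) = gg d z (k+1) x"
proof -
  have "frac (z + (\<Sum>j=1..i. real (i choose j) * gg d z k x j)) = frac (GG z x (k+1) i)" if "i \<in> {1..d}" for i
  proof -
    have "(\<Sum>j=1..i. real (i choose j) * gg d z k x j) = (\<Sum>j=1..i. real (i choose j) * frac (GG z x k j))"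
      using that by (intro sum.cong) (auto simp: gg_def)
    then show ?thesis using frac_sum_int[of z "\<lambda>j. i choose j" "\<lambda>j. GG z x k j" "{1..i}"]
      using GG_step[of z i x k] by simp
  qed
  then show ?thesis by (auto simp: fmap_def gg_def fun_eq_iff)
qed

lemma frac_cancel:
  fixes c u v :: real
  assumes "frac (c + u) = frac (c + v)" "0 \<le> u" "u < 1" "0 \<le> v" "v < 1"
  shows "u = v"
proof -
  define m where "m = floor (c + u) - floor (c + v)"
  have m: "u - v = of_int m"
    using assms(1) unfolding frac_def m_def by simp
  have "-1 < u - v" "u - v < 1" using assms by auto
  then have "m = 0" using m by linarith
  then show ?thesis using m by simp
qed

lemma fmap_inj: "inj_on (fmap d z) (torus d)"
proof (rule inj_onI)
  fix x y assume x: "x \<in> torus d" and y: "y \<in> torus d" and eq: "fmap d z x = fmap d z y"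
  have "\<forall>i'<i. x i' = y i'" for i
  proof (induction i)
    case 0 then show ?case by simp
  next
    case (Suc i)
    have "x i = y i"
    proof (cases "i \<in> {1..d}")
      case True
      have e: "frac (z + (\<Sum>j=1..i. real (i choose j) * x j)) = frac (z + (\<Sum>j=1..i. real (i choose j) * y j))"
        using eq True by (auto simp: fmap_def fun_eq_iff dest: spec[of _ i])
      have s: "(\<Sum>j=1..i. real (i choose j) * x j) = (\<Sum>j=1..<i. real (i choose j) * x j) + x i"
        "(\<Sum>j=1..i. real (i choose j) * y j) = (\<Sum>j=1..<i. real (i choose j) * y j) + y i"
        using True by (auto simp: atLeastLessThanSuc_atLeastAtMost[symmetric] )
      have "(\<Sum>j=1..<i. real (i choose j) * x j) = (\<Sum>j=1..<i. real (i choose j) * y j)"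
        using Suc.IH by (intro sum.cong) auto
      then show ?thesis
        using e s frac_cancel[of "z + (\<Sum>j=1..<i. real (i choose j) * y j)" "x i" "y i"] x y True
        by (auto simp: torus_def add.assoc)
    next
      case False
      then show ?thesis using x y by (auto simp: torus_def)
    qed
    then show ?case using Suc.IH less_Suc_eq by auto
  qed
  then show "x = y" by (auto simp: fun_eq_iff)
qed

lemma fmap_torus: "x \<in> torus d \<Longrightarrow> fmap d z x \<in> torus d"
  by (auto simp: fmap_def torus_def frac_lt_1)

lemma fiter_gg:
  assumes x: "x \<in> torus d"
  shows "fiter d z k x = gg d z (of_int k) x"
proof (cases "0 \<le> k")
  case True
  have "(fmap d z ^^ n) x = gg d z (of_nat n) x" for n
    by (induction n) (auto simp: gg_0[OF x] fmap_gg add.commute)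
  then show ?thesis using True by (simp add: fiter_def)
next
  case False
  have "(inv_into (torus d) (fmap d z) ^^ n) x = gg d z (- of_nat n) x" for n
  proof (induction n)
    case 0 then show ?case by (simp add: gg_0[OF x])
  next
    case (Suc n)
    have "gg d z (- of_nat n) x = fmap d z (gg d z (- of_nat (Suc n)) x)"
      by (simp add: fmap_gg)
    then show ?case using Suc.IH
      by (simp add: inv_into_f_f[OF fmap_inj gg_torus])
  qed
  from this[of "nat (-k)"] show ?thesis using False by (simp add: fiter_def)
qed

lemma Ix_iff:
  assumes x: "x \<in> torus d" and d: "d \<ge> 1"
  shows "k \<in> Ix d z b x \<longleftrightarrow> (\<exists>t\<in>{1..b-1}. frac (GG z x (of_int k) d) = log (real b) (real t))"
  using d by (simp add: Ix_def critical_def fiter_gg[OF x] gg_torus) (simp add: gg_def)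


definition GP :: "real \<Rightarrow> (nat \<Rightarrow> real) \<Rightarrow> nat \<Rightarrow> real poly" where
 "GP z x d = monom z d + (\<Sum>j=1..d. monom (real (d choose j) * x j) (d-j))"

lemma poly_GP: "poly (GP z x d) k = GG z x k d"
  by (simp add: GP_def GG_def poly_sum poly_monom algebra_simps)

lemma coeff_sum_monom_inj:
  fixes c :: "nat \<Rightarrow> real"
  assumes "j \<in> {1..d}"
  shows "coeff (\<Sum>j=1..d. monom (c j) (d-j)) (d-j) = c j"
proof -
  have "coeff (\<Sum>j=1..d. monom (c j) (d-j)) (d-j) = (\<Sum>j'\<in>{1..d}. if d - j' = d - j then c j' else 0)"
    by (simp add: coeff_sum coeff_monom)
  also have "\<dots> = (\<Sum>j'\<in>{j}. if d - j' = d - j then c j' else 0)"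
    by (rule sum.mono_neutral_right) (use assms in auto)
  finally show ?thesis by simp
qed

lemma GG_inj:
  assumes x: "x \<in> torus d" and y: "y \<in> torus d" and A: "card A \<ge> d"
    and eq: "\<And>k. k \<in> A \<Longrightarrow> GG z x k d = GG z y k d"
  shows "x = y"
proof -
  define Q where "Q = (\<Sum>j=1..d. monom (real (d choose j) * (x j - y j)) (d-j))"
  have pQ: "poly Q k = GG z x k d - GG z y k d" for k
    by (simp add: Q_def GG_def poly_sum poly_monom algebra_simps sum_subtractf)
  have dQ: "degree Q < d \<or> Q = 0"
  proof (cases "d = 0")
    case True then show ?thesis by (simp add: Q_def)
  next
    case False
    have "degree Q \<le> d - 1" unfolding Q_def
      by (rule degree_sum_le) (auto intro: order.trans[OF degree_monom_le])
    then show ?thesis using False by auto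
  qed
  have "Q = 0"
  proof (rule ccontr)
    assume "Q \<noteq> 0"
    then have "degree Q < card A" using dQ A by auto
    then have "Q = 0"
      by (intro poly_eqI_degree[of A Q 0]) (auto simp: pQ eq)
    with \<open>Q \<noteq> 0\<close> show False by simp
  qed
  have "x j = y j" for j
  proof (cases "j \<in> {1..d}")
    case True
    have "coeff Q (d-j) = real (d choose j) * (x j - y j)"
      unfolding Q_def by (rule coeff_sum_monom_inj[OF True])
    then have "real (d choose j) * (x j - y j) = 0" using \<open>Q = 0\<close> by simp
    moreover have "real (d choose j) \<noteq> 0" using True by auto
    ultimately show ?thesis by simp
  next
    case False then show ?thesis using x y by (auto simp: torus_def)
  qed
  then show ?thesis by auto
qed

lemma GG_bound:
  assumes x: "x \<in> torus d"
  shows "\<bar>GG z x k d\<bar> \<le> \<bar>z\<bar> * \<bar>k\<bar>^d + (\<Sum>j=1..d. real (d choose j) * \<bar>k\<bar>^(d-j))"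
proof -
  have "\<bar>\<Sum>j=1..d. real (d choose j) * k^(d-j) * x j\<bar> \<le> (\<Sum>j=1..d. \<bar>real (d choose j) * k^(d-j) * x j\<bar>)"
    by (rule sum_abs)
  also have "\<dots> \<le> (\<Sum>j=1..d. real (d choose j) * \<bar>k\<bar>^(d-j))"
  proof (rule sum_mono)
    fix j assume "j \<in> {1..d}"
    then have "0 \<le> x j \<and> x j < 1" using x unfolding torus_def by blast
    then have "\<bar>x j\<bar> \<le> 1" by simp
    then show "\<bar>real (d choose j) * k^(d-j) * x j\<bar> \<le> real (d choose j) * \<bar>k\<bar>^(d-j)"
      by (simp add: abs_mult power_abs mult_left_le)
  qed
  finally have S: "\<bar>\<Sum>j=1..d. real (d choose j) * k^(d-j) * x j\<bar> \<le> (\<Sum>j=1..d. real (d choose j) * \<bar>k\<bar>^(d-j))" .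
  have "\<bar>GG z x k d\<bar> \<le> \<bar>z * k^d\<bar> + \<bar>\<Sum>j=1..d. real (d choose j) * k^(d-j) * x j\<bar>"
    unfolding GG_def by (rule abs_triangle_ineq)
  also have "\<bar>z * k^d\<bar> = \<bar>z\<bar> * \<bar>k\<bar>^d" by (simp add: abs_mult power_abs)
  finally show ?thesis using S by linarith
qed

lemma partI:
  assumes d: "d \<ge> 1" and I: "finite I" "card I = d"
  shows "finite {x \<in> torus d. I \<subseteq> Ix d z b x}"
proof -
  define S where "S = {x \<in> torus d. I \<subseteq> Ix d z b x}"
  define \<Phi> where "\<Phi> x = restrict (\<lambda>k. GG z x (of_int k) d) I" for x
  define M where "M k = ceiling (\<bar>z\<bar> * \<bar>real_of_int k\<bar>^d + (\<Sum>j=1..d. real (d choose j) * \<bar>real_of_int k\<bar>^(d-j))) + 1" for k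
  define V where "V k = (\<lambda>(t,n). log (real b) (real t) + real_of_int n) ` ({1..b-1} \<times> {-M k..M k})" for k
  have inj: "inj_on \<Phi> S"
  proof (rule inj_onI)
    fix x y assume "x \<in> S" "y \<in> S" "\<Phi> x = \<Phi> y"
    then have x: "x \<in> torus d" and y: "y \<in> torus d" by (auto simp: S_def)
    have c: "card ((of_int :: int \<Rightarrow> real) ` I) = d"
      using I by (simp add: card_image inj_on_def)
    show "x = y"
    proof (rule GG_inj[OF x y, of "(of_int :: int \<Rightarrow> real) ` I" z])
      show "d \<le> card ((of_int :: int \<Rightarrow> real) ` I)" using c by simp
      fix k assume "k \<in> (of_int :: int \<Rightarrow> real) ` I"
      then obtain k' where "k' \<in> I" "k = of_int k'" by auto
      have "\<Phi> x k' = \<Phi> y k'" using \<open>\<Phi> x = \<Phi> y\<close> by simp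
      then show "GG z x k d = GG z y k d"
        using \<open>k' \<in> I\<close> \<open>k = of_int k'\<close> by (simp add: \<Phi>_def)
    qed
  qed
  have sub: "\<Phi> ` S \<subseteq> PiE I V"
  proof
    fix w assume "w \<in> \<Phi> ` S"
    then obtain x where xS: "x \<in> S" and w: "w = \<Phi> x" by auto
    have x: "x \<in> torus d" using xS by (auto simp: S_def)
    show "w \<in> PiE I V"
      unfolding w \<Phi>_def restrict_PiE_iff
    proof
      fix k assume kI: "k \<in> I"
      then have "k \<in> Ix d z b x" using xS by (auto simp: S_def)
      then obtain t where t: "t \<in> {1..b-1}" and ft: "frac (GG z x (of_int k) d) = log (real b) (real t)"
        using Ix_iff[OF x d] by auto
      define G where "G = GG z x (of_int k) d"
      have Gb: "\<bar>G\<bar> \<le> \<bar>z\<bar> * \<bar>real_of_int k\<bar>^d + (\<Sum>j=1..d. real (d choose j) * \<bar>real_of_int k\<bar>^(d-j))"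
        unfolding G_def by (rule GG_bound[OF x])
      have "G = log (real b) (real t) + real_of_int (floor G)"
        using ft unfolding G_def frac_def by simp
      moreover have "floor G \<in> {-M k..M k}"
      proof -
        define B where "B = \<bar>z\<bar> * \<bar>real_of_int k\<bar>^d + (\<Sum>j=1..d. real (d choose j) * \<bar>real_of_int k\<bar>^(d-j))"
        have MB: "M k = ceiling B + 1" unfolding M_def B_def by simp
        have f1: "real_of_int (floor G) \<le> G" by (rule of_int_floor_le)
        have f2: "G < real_of_int (floor G) + 1" by (rule real_of_int_floor_add_one_gt)
        have c1: "B \<le> real_of_int (ceiling B)" by (rule le_of_int_ceiling)
        have "\<bar>G\<bar> \<le> B" using Gb unfolding B_def .
        then have "real_of_int (floor G) \<le> real_of_int (M k)" "- real_of_int (M k) \<le> real_of_int (floor G)"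
          using f1 f2 c1 MB by linarith+
        then show ?thesis by simp
      qed
      ultimately show "GG z x (of_int k) d \<in> V k"
        unfolding V_def G_def using t by (auto intro!: image_eqI[where x="(t, floor (GG z x (of_int k) d))"])
    qed
  qed
  have "finite (PiE I V)" using I by (intro finite_PiE) (auto simp: V_def)
  then have "finite (\<Phi> ` S)" using sub finite_subset by blast
  then show ?thesis using inj finite_imageD unfolding S_def by blast
qed


lemma degree_GP: "degree (GP z x d) \<le> d"
  unfolding GP_def
  by (intro degree_add_le order.trans[OF degree_monom_le] degree_sum_le) (auto intro: order.trans[OF degree_monom_le])

lemma coeff_GP: "coeff (GP z x d) d = z"
proof -
  have "coeff (\<Sum>j=1..d. monom (real (d choose j) * x j) (d-j)) d = 0"
    by (auto simp: coeff_sum coeff_monom intro!: sum.neutral)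
  then show ?thesis by (simp add: GP_def)
qed

lemma divdiff:
  fixes J :: "real set"
  assumes J: "finite J" "card J = Suc d"
  shows "(\<Sum>i\<in>J. GG z x i d / (\<Prod>j\<in>J-{i}. (i - j))) = z"
proof -
  define Pi where "Pi i = (\<Prod>j\<in>J-{i}. (i - j))" for i
  define B where "B i = (\<Prod>j\<in>J-{i}. [:-j, 1:])" for i
  define Lp where "Lp = (\<Sum>i\<in>J. smult (GG z x i d / Pi i) (B i))"
  have Pi0: "Pi i \<noteq> 0" for i using J by (simp add: Pi_def)
  have polyB: "poly (B i) l = (\<Prod>j\<in>J-{i}. (l - j))" for i l
    by (simp add: B_def poly_prod)
  have degB: "degree (B i) = d" and lcB: "lead_coeff (B i) = 1" if "i \<in> J" for i
  proof -
    have "degree (B i) = (\<Sum>j\<in>J-{i}. degree [:-j, 1:])"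
      unfolding B_def by (rule degree_prod_eq_sum_degree) auto
    also have "\<dots> = d" using J that by simp
    finally show "degree (B i) = d" .
    show "lead_coeff (B i) = 1" unfolding B_def by (simp add: lead_coeff_prod)
  qed
  have polyL: "poly Lp l = GG z x l d" if l: "l \<in> J" for l
  proof -
    have "poly Lp l = (\<Sum>i\<in>J. GG z x i d / Pi i * poly (B i) l)"
      by (simp add: Lp_def poly_sum)
    also have "\<dots> = (\<Sum>i\<in>{l}. GG z x i d / Pi i * poly (B i) l)"
    proof (rule sum.mono_neutral_right)
      show "\<forall>i\<in>J - {l}. GG z x i d / Pi i * poly (B i) l = 0"
      proof
        fix i assume i: "i \<in> J - {l}"
        have "(\<Prod>j\<in>J-{i}. (l - j)) = 0" using i l J by (intro prod_zero) auto
        then show "GG z x i d / Pi i * poly (B i) l = 0" by (simp add: polyB)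
      qed
    qed (use J l in auto)
    also have "\<dots> = GG z x l d" using Pi0[of l] by (simp add: polyB Pi_def)
    finally show ?thesis .
  qed
  have degL: "degree Lp \<le> d"
    unfolding Lp_def using J degB by (intro degree_sum_le) (auto intro: order.trans[OF degree_smult_le])
  have "Lp = GP z x d"
    by (rule poly_eqI_degree[of J]) (use J degL degree_GP[of z x d] in \<open>auto simp: polyL poly_GP\<close>)
  then have "coeff Lp d = z" by (simp add: coeff_GP)
  moreover have "coeff Lp d = (\<Sum>i\<in>J. GG z x i d / Pi i)"
    unfolding Lp_def coeff_sum using degB lcB by (intro sum.cong) auto
  ultimately show ?thesis by (simp add: Pi_def)
qed


lemma ln_decomp:
  fixes n b :: nat
  assumes "1 \<le> n" "n \<le> b"
  shows "ln (real n) = (\<Sum>p\<in>{p. prime p \<and> p \<le> b}. real (multiplicity p n) * ln (real p))"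
proof -
  have n0: "n \<noteq> 0" using assms by simp
  have "real n = real (\<Prod>p \<in> prime_factors n. p ^ multiplicity p n)"
    using prod_prime_factors[OF n0] by simp
  also have "\<dots> = (\<Prod>p \<in> prime_factors n. real p ^ multiplicity p n)" by simp
  finally have "ln (real n) = ln (\<Prod>p \<in> prime_factors n. real p ^ multiplicity p n)" by simp
  also have "\<dots> = (\<Sum>p \<in> prime_factors n. ln (real p ^ multiplicity p n))"
    by (rule ln_prod) (auto dest: in_prime_factors_imp_prime simp: prime_gt_0_nat)
  also have "\<dots> = (\<Sum>p \<in> prime_factors n. real (multiplicity p n) * ln (real p))"
    by (intro sum.cong refl) (auto dest!: in_prime_factors_imp_prime simp: prime_gt_0_nat ln_realpow)
  also have "\<dots> = (\<Sum>p\<in>{p. prime p \<and> p \<le> b}. real (multiplicity p n) * ln (real p))"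
  proof (rule sum.mono_neutral_left)
    show "finite {p. prime p \<and> p \<le> b}" by simp
    show "prime_factors n \<subseteq> {p. prime p \<and> p \<le> b}"
    proof
      fix p assume p: "p \<in> prime_factors n"
      then have "p dvd n" by (rule in_prime_factors_imp_dvd)
      then have "p \<le> n" using n0 by (simp add: dvd_imp_le)
      then show "p \<in> {p. prime p \<and> p \<le> b}" using p assms by (auto dest: in_prime_factors_imp_prime)
    qed
    show "\<forall>i\<in>{p. prime p \<and> p \<le> b} - prime_factors n. real (multiplicity i n) * ln (real i) = 0"
      using n0 by (auto simp: prime_factors_multiplicity)
  qed
  finally show ?thesis .
qed

lemma ln_primes_indep:
  fixes c :: "nat \<Rightarrow> int"
  assumes P: "finite P" "\<And>p. p \<in> P \<Longrightarrow> prime p"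
    and s: "(\<Sum>p\<in>P. real_of_int (c p) * ln (real p)) = 0"
  shows "\<forall>p\<in>P. c p = 0"
proof -
  define A where "A = {p\<in>P. c p > 0}"
  define B where "B = {p\<in>P. c p < 0}"
  define X where "X = (\<Prod>p\<in>A. p ^ nat (c p))"
  define Y where "Y = (\<Prod>p\<in>B. p ^ nat (- c p))"
  have fin: "finite A" "finite B" using P by (auto simp: A_def B_def)
  have pos: "p > 0" if "p \<in> P" for p using P(2)[OF that] prime_gt_0_nat by blast
  have "(\<Sum>p\<in>P. real_of_int (c p) * ln (real p))
     = (\<Sum>p\<in>A. real_of_int (c p) * ln (real p)) + (\<Sum>p\<in>B. real_of_int (c p) * ln (real p))"
  proof -
    have "(\<Sum>p\<in>P. real_of_int (c p) * ln (real p)) = (\<Sum>p\<in>A \<union> B. real_of_int (c p) * ln (real p))"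
      by (rule sum.mono_neutral_right) (use P in \<open>auto simp: A_def B_def\<close>)
    also have "\<dots> = (\<Sum>p\<in>A. real_of_int (c p) * ln (real p)) + (\<Sum>p\<in>B. real_of_int (c p) * ln (real p))"
      by (rule sum.union_disjoint) (use fin in \<open>auto simp: A_def B_def\<close>)
    finally show ?thesis .
  qed
  then have eq: "(\<Sum>p\<in>A. real_of_int (c p) * ln (real p)) = (\<Sum>p\<in>B. real_of_int (- c p) * ln (real p))"
    using s by (simp add: sum_negf)
  have lX: "ln (real X) = (\<Sum>p\<in>A. real_of_int (c p) * ln (real p))"
  proof -
    have "ln (real X) = (\<Sum>p\<in>A. ln (real p ^ nat (c p)))"
      unfolding X_def of_nat_prod of_nat_power
      by (rule ln_prod) (use pos fin in \<open>auto simp: A_def\<close>)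
    also have "\<dots> = (\<Sum>p\<in>A. real_of_int (c p) * ln (real p))"
      by (intro sum.cong refl) (use pos in \<open>auto simp: A_def ln_realpow\<close>)
    finally show ?thesis .
  qed
  have lY: "ln (real Y) = (\<Sum>p\<in>B. real_of_int (- c p) * ln (real p))"
  proof -
    have "ln (real Y) = (\<Sum>p\<in>B. ln (real p ^ nat (- c p)))"
      unfolding Y_def of_nat_prod of_nat_power
      by (rule ln_prod) (use pos fin in \<open>auto simp: B_def\<close>)
    also have "\<dots> = (\<Sum>p\<in>B. real_of_int (- c p) * ln (real p))"
      by (intro sum.cong refl) (use pos in \<open>auto simp: B_def ln_realpow\<close>)
    finally show ?thesis .
  qed
  have Xp: "X > 0" unfolding X_def using pos by (intro prod_pos) (auto simp: A_def)
  have Yp: "Y > 0" unfolding Y_def using pos by (intro prod_pos) (auto simp: B_def)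
  have "ln (real X) = ln (real Y)" using eq lX lY by simp
  then have "real X = real Y" using Xp Yp by simp
  then have XY: "X = Y" by simp
  show ?thesis
  proof
    fix q assume q: "q \<in> P"
    have mX: "multiplicity q X = (if q \<in> A then nat (c q) else 0)"
      unfolding X_def by (rule multiplicity_prod_prime_powers) (use fin P q in \<open>auto simp: A_def\<close>)
    have mY: "multiplicity q Y = (if q \<in> B then nat (- c q) else 0)"
      unfolding Y_def by (rule multiplicity_prod_prime_powers) (use fin P q in \<open>auto simp: B_def\<close>)
    show "c q = 0"
      using mX mY XY q by (auto simp: A_def B_def split: if_splits)
  qed
qed


lemma divdiff_int:
  fixes J :: "int set"
  assumes J: "finite J" "card J = Suc d"
  shows "(\<Sum>i\<in>J. GG z x (of_int i) d / of_int (\<Prod>j\<in>J-{i}. (i - j))) = z"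
proof -
  have inj: "inj_on (of_int :: int \<Rightarrow> real) A" for A by (auto simp: inj_on_def)
  have c: "card ((of_int :: int \<Rightarrow> real) ` J) = Suc d" using J by (simp add: card_image[OF inj])
  have "z = (\<Sum>r\<in>(of_int :: int \<Rightarrow> real) ` J. GG z x r d / (\<Prod>s\<in>(of_int :: int \<Rightarrow> real) ` J-{r}. (r - s)))"
    using divdiff[of "(of_int :: int \<Rightarrow> real) ` J" d z x] J c by simp
  also have "\<dots> = (\<Sum>i\<in>J. GG z x (of_int i) d / (\<Prod>s\<in>(of_int :: int \<Rightarrow> real) ` J-{of_int i}. (of_int i - s)))"
    by (subst sum.reindex[OF inj]) simp
  also have "\<dots> = (\<Sum>i\<in>J. GG z x (of_int i) d / of_int (\<Prod>j\<in>J-{i}. (i - j)))"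
  proof (rule sum.cong[OF refl])
    fix i assume "i \<in> J"
    have "(of_int :: int \<Rightarrow> real) ` J - {of_int i} = (of_int :: int \<Rightarrow> real) ` (J - {i})" by auto
    then have "(\<Prod>s\<in>(of_int :: int \<Rightarrow> real) ` J-{of_int i}. (of_int i - s)) = (\<Prod>j\<in>J-{i}. (of_int i - of_int j))"
      by (simp add: prod.reindex[OF inj])
    then show "GG z x (of_int i) d / (\<Prod>s\<in>(of_int :: int \<Rightarrow> real) ` J-{of_int i}. (of_int i - s)) = GG z x (of_int i) d / of_int (\<Prod>j\<in>J-{i}. (i - j))"
      by simp
  qed
  finally show ?thesis by simp
qed

lemma relation:
  fixes J :: "int set" and a :: real and b :: nat
  assumes x: "x \<in> torus d" and d: "d \<ge> 1" and b: "b \<ge> 2" and a: "a > 0"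
    and JI: "J \<subseteq> Ix d (log (real b) a) b x" and J: "finite J" "card J = Suc d"
  shows "\<exists>D N :: int. \<exists>e :: int \<Rightarrow> int. \<exists>t :: int \<Rightarrow> nat. D > 0 \<and> (\<forall>i\<in>J. t i \<in> {1..b-1})
     \<and> (\<forall>i\<in>J. e i * (\<Prod>j\<in>J-{i}. (i - j)) = D)
     \<and> real_of_int D * ln a = real_of_int N * ln (real b) + (\<Sum>i\<in>J. real_of_int (e i) * ln (real (t i)))"
proof -
  define z where "z = log (real b) a"
  have "\<forall>i\<in>J. \<exists>t. t \<in> {1..b-1} \<and> frac (GG z x (of_int i) d) = log (real b) (real t)"
    using JI Ix_iff[OF x d] unfolding z_def by blast
  then obtain t where t: "\<forall>i\<in>J. t i \<in> {1..b-1} \<and> frac (GG z x (of_int i) d) = log (real b) (real (t i))"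
    by metis
  define Pi where "Pi i = (\<Prod>j\<in>J-{i}. (i - j))" for i
  define D where "D = (\<Prod>i\<in>J. \<bar>Pi i\<bar>)"
  define e where "e i = D div Pi i" for i
  define N where "N = (\<Sum>i\<in>J. e i * floor (GG z x (of_int i) d))"
  have Pi0: "Pi i \<noteq> 0" for i using J by (simp add: Pi_def)
  have Dpos: "D > 0" unfolding D_def using Pi0 by (intro prod_pos) auto
  have eP: "e i * Pi i = D" if "i \<in> J" for i
  proof -
    have "\<bar>Pi i\<bar> dvd D" unfolding D_def using J that by (intro dvd_prodI) auto
    then have "Pi i dvd D" by simp
    then show ?thesis unfolding e_def by simp
  qed
  have lb: "ln (real b) > 0" using b by simp
  have zl: "z * ln (real b) = ln a" unfolding z_def log_def using lb by simp
  have "real_of_int D * z = (\<Sum>i\<in>J. real_of_int D * (GG z x (of_int i) d / of_int (Pi i)))"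
    using divdiff_int[OF J, of z x] unfolding Pi_def by (simp only: sum_distrib_left[symmetric])
  also have "\<dots> = (\<Sum>i\<in>J. real_of_int (e i) * GG z x (of_int i) d)"
  proof (rule sum.cong[OF refl])
    fix i assume i: "i \<in> J"
    have "real_of_int D = real_of_int (e i) * real_of_int (Pi i)" using eP[OF i] by (metis of_int_mult)
    then show "real_of_int D * (GG z x (of_int i) d / of_int (Pi i)) = real_of_int (e i) * GG z x (of_int i) d"
      using Pi0[of i] by (simp add: field_simps)
  qed
  also have "\<dots> = (\<Sum>i\<in>J. real_of_int (e i) * (log (real b) (real (t i)) + of_int (floor (GG z x (of_int i) d))))"
  proof (rule sum.cong[OF refl])
    fix i assume i: "i \<in> J"
    have "GG z x (of_int i) d = frac (GG z x (of_int i) d) + of_int (floor (GG z x (of_int i) d))"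
      by (simp add: frac_def)
    then show "real_of_int (e i) * GG z x (of_int i) d = real_of_int (e i) * (log (real b) (real (t i)) + of_int (floor (GG z x (of_int i) d)))"
      using t i by simp
  qed
  also have "\<dots> = real_of_int N + (\<Sum>i\<in>J. real_of_int (e i) * log (real b) (real (t i)))"
    by (simp add: N_def distrib_left sum.distrib)
  finally have Dz: "real_of_int D * z = real_of_int N + (\<Sum>i\<in>J. real_of_int (e i) * log (real b) (real (t i)))" .
  have "real_of_int D * ln a = (real_of_int D * z) * ln (real b)" using zl by simp
  also have "\<dots> = real_of_int N * ln (real b) + (\<Sum>i\<in>J. real_of_int (e i) * (log (real b) (real (t i)) * ln (real b)))"
    unfolding Dz by (simp add: distrib_right sum_distrib_right mult.assoc)
  also have "\<dots> = real_of_int N * ln (real b) + (\<Sum>i\<in>J. real_of_int (e i) * ln (real (t i)))"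
    using lb by (simp add: log_def)
  finally show ?thesis using Dpos t eP unfolding Pi_def by blast
qed


lemma mult_le_self:
  fixes p n :: nat
  assumes p: "prime p" and n: "n \<ge> 1"
  shows "multiplicity p n \<le> n"
proof -
  have "p ^ multiplicity p n dvd n" by (rule multiplicity_dvd)
  then have "p ^ multiplicity p n \<le> n" using n by (simp add: dvd_imp_le)
  moreover have "multiplicity p n < 2 ^ multiplicity p n" by (rule less_exp)
  moreover have "(2::nat) ^ multiplicity p n \<le> p ^ multiplicity p n"
    using prime_ge_2_nat[OF p] by (simp add: power_mono)
  ultimately show ?thesis by linarith
qed

lemma factor_le_prod:
  fixes f :: "'a \<Rightarrow> int"
  assumes "finite A" "j \<in> A" "\<And>a. a \<in> A \<Longrightarrow> 1 \<le> f a"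
  shows "f j \<le> prod f A"
proof -
  have "prod f A = f j * prod f (A - {j})" using assms by (simp add: prod.remove)
  moreover have "1 \<le> prod f (A - {j})" using assms by (intro prod_ge_1) auto
  moreover have "1 \<le> f j" using assms by auto
  ultimately show ?thesis by (simp add: mult_le_cancel_left1)
qed

lemma abs_prod_int: "\<bar>prod (f :: 'a \<Rightarrow> int) A\<bar> = (\<Prod>x\<in>A. \<bar>f x\<bar>)"
  by (induction A rule: infinite_finite_induct) (auto simp: abs_mult)

lemma Pi_lower:
  fixes J :: "int set"
  assumes J: "finite J" and i: "i \<in> J" and k: "k \<in> J" and l: "l \<in> J" and kl: "l < k"
  shows "k - l \<le> 2 * \<bar>\<Prod>j\<in>J-{i}. (i - j)\<bar>"
proof -
  have ab: "\<bar>\<Prod>j\<in>J-{i}. (i - j)\<bar> = (\<Prod>j\<in>J-{i}. \<bar>i - j\<bar>)"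
    by (rule abs_prod_int)
  have fac: "\<bar>i - j0\<bar> \<le> \<bar>\<Prod>j\<in>J-{i}. (i - j)\<bar>" if "j0 \<in> J - {i}" for j0
    unfolding ab using J that by (intro factor_le_prod[where f = "\<lambda>j. \<bar>i - j\<bar>"]) auto
  show ?thesis
  proof (cases "i = k \<or> i = l")
    case True
    then show ?thesis using fac[of l] fac[of k] k l kl by auto
  next
    case False
    then show ?thesis using fac[of l] fac[of k] k l kl by auto
  qed
qed

lemma choose_J:
  fixes X :: "int set"
  assumes d: "d \<ge> 1" and X: "\<not> (finite X \<and> card X \<le> d)" and k: "k \<in> X" and l: "l \<in> X" and kl: "k \<noteq> l"
  shows "\<exists>J. J \<subseteq> X \<and> finite J \<and> card J = Suc d \<and> k \<in> J \<and> l \<in> J"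
proof -
  obtain A where A: "A \<subseteq> X - {k, l}" "finite A" "card A = d - 1"
  proof (cases "finite X")
    case True
    then have "card X \<ge> Suc d" using X by auto
    moreover have "card (X - {k, l}) = card X - 2" using True k l kl by (simp add: card_Diff_subset)
    ultimately have "d - 1 \<le> card (X - {k, l})" by simp
    then show ?thesis using obtain_subset_with_card_n that by blast
  next
    case False
    then have "\<not> finite (X - {k, l})" by simp
    then show ?thesis using infinite_arbitrarily_large[of "X - {k,l}" "d - 1"] that by blast
  qed
  define J where "J = A \<union> {k, l}"
  have "card J = card A + card {k, l}" unfolding J_def using A by (intro card_Un_disjoint) auto
  then have "card J = Suc d" using A kl d by simp
  moreover have "J \<subseteq> X" "finite J" "k \<in> J" "l \<in> J" using A k l unfolding J_def by auto
  ultimately show ?thesis by blast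
qed


lemma rel_primes:
  fixes J :: "int set" and b :: nat and e :: "int \<Rightarrow> int" and t :: "int \<Rightarrow> nat"
  assumes b: "b \<ge> 2" and t: "\<forall>i\<in>J. t i \<in> {1..b-1}"
    and rel: "real_of_int D * ln a = real_of_int N * ln (real b) + (\<Sum>i\<in>J. real_of_int (e i) * ln (real (t i)))"
  shows "real_of_int D * ln a = (\<Sum>p\<in>{p. prime p \<and> p \<le> b}.
      real_of_int (N * int (multiplicity p b) + (\<Sum>i\<in>J. e i * int (multiplicity p (t i)))) * ln (real p))"
proof -
  define P where "P = {p. prime p \<and> p \<le> b}"
  have lb: "ln (real b) = (\<Sum>p\<in>P. real (multiplicity p b) * ln (real p))"
    unfolding P_def using b by (intro ln_decomp) auto
  have lt: "ln (real (t i)) = (\<Sum>p\<in>P. real (multiplicity p (t i)) * ln (real p))" if "i \<in> J" for i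
    unfolding P_def using t that by (intro ln_decomp) auto
  have "(\<Sum>i\<in>J. real_of_int (e i) * ln (real (t i)))
      = (\<Sum>i\<in>J. \<Sum>p\<in>P. real_of_int (e i) * real (multiplicity p (t i)) * ln (real p))"
    by (intro sum.cong refl) (simp add: lt sum_distrib_left mult.assoc)
  also have "\<dots> = (\<Sum>p\<in>P. \<Sum>i\<in>J. real_of_int (e i) * real (multiplicity p (t i)) * ln (real p))"
    by (rule sum.swap)
  also have "\<dots> = (\<Sum>p\<in>P. real_of_int (\<Sum>i\<in>J. e i * int (multiplicity p (t i))) * ln (real p))"
    by (simp add: sum_distrib_right)
  finally have s2: "(\<Sum>i\<in>J. real_of_int (e i) * ln (real (t i))) = (\<Sum>p\<in>P. real_of_int (\<Sum>i\<in>J. e i * int (multiplicity p (t i))) * ln (real p))" .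
  have s1: "real_of_int N * ln (real b) = (\<Sum>p\<in>P. real_of_int (N * int (multiplicity p b)) * ln (real p))"
    by (simp add: lb sum_distrib_left mult.assoc)
  show ?thesis
    unfolding rel s1 s2 P_def[symmetric] sum.distrib[symmetric]
    by (intro sum.cong refl) (simp add: distrib_right)
qed

lemma rat_lemma:
  fixes b :: nat and D0 :: int and c0 :: "nat \<Rightarrow> int"
  assumes b: "b \<ge> 2" and a: "a > 0" and D0: "D0 > 0"
    and rel: "real_of_int D0 * ln a = (\<Sum>p\<in>{p. prime p \<and> p \<le> b}. real_of_int (c0 p) * ln (real p))"
    and hprop: "\<forall>p\<in>{p. prime p \<and> p \<le> b}. \<forall>q\<in>{p. prime p \<and> p \<le> b}.
        c0 p * int (multiplicity q b) = c0 q * int (multiplicity p b)"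
  shows "log (real b) a \<in> \<rat>"
proof -
  define P where "P = {p. prime p \<and> p \<le> b}"
  obtain p0 where p0: "prime p0" "p0 dvd b" using b prime_factor_nat[of b] by auto
  have p0P: "p0 \<in> P" using p0 b unfolding P_def by (auto simp: dvd_imp_le)
  define v0 where "v0 = multiplicity p0 b"
  have v0: "v0 \<ge> 1" using p0 b unfolding v0_def
    by (simp add: prime_multiplicity_gt_zero_iff Suc_le_eq)
  have "real_of_int D0 * real v0 * ln a = (\<Sum>q\<in>P. real_of_int (c0 q * int v0) * ln (real q))"
  proof -
    have "real_of_int D0 * real v0 * ln a = real v0 * (real_of_int D0 * ln a)" by simp
    also have "\<dots> = (\<Sum>q\<in>P. real v0 * (real_of_int (c0 q) * ln (real q)))"
      using rel unfolding P_def[symmetric] by (simp add: sum_distrib_left)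
    finally show ?thesis by (simp add: algebra_simps)
  qed
  also have "\<dots> = (\<Sum>q\<in>P. real_of_int (c0 p0) * (real (multiplicity q b) * ln (real q)))"
  proof (intro sum.cong refl)
    fix q assume "q \<in> P"
    then have "c0 q * int v0 = c0 p0 * int (multiplicity q b)"
      using hprop p0P unfolding P_def v0_def by auto
    then show "real_of_int (c0 q * int v0) * ln (real q) = real_of_int (c0 p0) * (real (multiplicity q b) * ln (real q))"
      by (metis (no_types, lifting) mult.assoc of_int_mult of_int_of_nat_eq)
  qed
  also have "\<dots> = real_of_int (c0 p0) * ln (real b)"
    using ln_decomp[of b b] b unfolding P_def by (simp add: sum_distrib_left)
  finally have eq: "real_of_int D0 * real v0 * ln a = real_of_int (c0 p0) * ln (real b)" .
  have lb: "ln (real b) > 0" using b by simp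
  have "log (real b) a = real_of_int (c0 p0) / (real_of_int D0 * real v0)"
    unfolding log_def using eq lb D0 v0 by (simp add: field_simps)
  then show ?thesis by simp
qed


lemma key_bound:
  fixes b :: nat and D0 :: int and c0 :: "nat \<Rightarrow> int" and k l :: int
  assumes x: "x \<in> torus d" and d: "d \<ge> 1" and b: "b \<ge> 2" and a: "a > 0" and D0: "D0 > 0"
    and rel0: "real_of_int D0 * ln a = (\<Sum>p\<in>{p. prime p \<and> p \<le> b}. real_of_int (c0 p) * ln (real p))"
    and pP: "p \<in> {p. prime p \<and> p \<le> b}" and qP: "q \<in> {p. prime p \<and> p \<le> b}"
    and delta: "c0 p * int (multiplicity q b) \<noteq> c0 q * int (multiplicity p b)"
    and big: "\<not> (finite (Ix d (log (real b) a) b x) \<and> card (Ix d (log (real b) a) b x) \<le> d)"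
    and k: "k \<in> Ix d (log (real b) a) b x" and l: "l \<in> Ix d (log (real b) a) b x" and kl: "l < k"
  shows "k - l \<le> 2 * (int d + 1) * D0 * (2 * int b * int b)"
proof -
  define P where "P = {p. prime p \<and> p \<le> b}"
  define v where "v pp nn = int (multiplicity (pp::nat) (nn::nat))" for pp nn
  obtain J where J: "J \<subseteq> Ix d (log (real b) a) b x" "finite J" "card J = Suc d" "k \<in> J" "l \<in> J"
    using choose_J[OF d big k l] kl by auto
  obtain D N :: int and e :: "int \<Rightarrow> int" and t :: "int \<Rightarrow> nat" where
    Dp: "D > 0" and t: "\<forall>i\<in>J. t i \<in> {1..b-1}" and eP: "\<forall>i\<in>J. e i * (\<Prod>j\<in>J-{i}. (i - j)) = D"
    and rel: "real_of_int D * ln a = real_of_int N * ln (real b) + (\<Sum>i\<in>J. real_of_int (e i) * ln (real (t i)))"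
    using relation[OF x d b a J(1-3)] by blast
  define cJ where "cJ p = N * v p b + (\<Sum>i\<in>J. e i * v p (t i))" for p
  have relJ: "real_of_int D * ln a = (\<Sum>p\<in>P. real_of_int (cJ p) * ln (real p))"
    using rel_primes[OF b t rel] unfolding cJ_def v_def P_def .
  have "(\<Sum>p\<in>P. real_of_int (D0 * cJ p - D * c0 p) * ln (real p)) =
      real_of_int D0 * (\<Sum>p\<in>P. real_of_int (cJ p) * ln (real p)) - real_of_int D * (\<Sum>p\<in>P. real_of_int (c0 p) * ln (real p))"
    by (simp add: sum_distrib_left sum_subtractf algebra_simps)
  also have "\<dots> = real_of_int D0 * (real_of_int D * ln a) - real_of_int D * (real_of_int D0 * ln a)"
    using relJ rel0 unfolding P_def[symmetric] by simp
  also have "\<dots> = 0" by simp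
  finally have "\<forall>p\<in>P. D0 * cJ p - D * c0 p = 0"
    by (intro ln_primes_indep) (auto simp: P_def)
  then have eqp: "D0 * cJ p = D * c0 p" "D0 * cJ q = D * c0 q" using pP qP unfolding P_def by auto
  define w where "w i = v p (t i) * v q b - v q (t i) * v p b" for i
  define K where "K = 2 * int b * int b"
  have "D * (c0 p * v q b - c0 q * v p b) = (D * c0 p) * v q b - (D * c0 q) * v p b"
    by (simp add: algebra_simps)
  also have "\<dots> = (D0 * cJ p) * v q b - (D0 * cJ q) * v p b" using eqp by simp
  also have "\<dots> = D0 * (cJ p * v q b - cJ q * v p b)" by (simp add: algebra_simps)
  also have "cJ p * v q b - cJ q * v p b = (\<Sum>i\<in>J. e i * w i)"
    unfolding cJ_def w_def by (simp add: algebra_simps sum_distrib_right sum_distrib_left sum_subtractf)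
  finally have main: "D * (c0 p * v q b - c0 q * v p b) = D0 * (\<Sum>i\<in>J. e i * w i)" .
  have dne: "c0 p * v q b - c0 q * v p b \<noteq> 0" using delta unfolding v_def by simp
  have "D \<le> \<bar>D * (c0 p * v q b - c0 q * v p b)\<bar>"
    using Dp dne by (simp add: abs_mult)
  also have "\<dots> = D0 * \<bar>\<Sum>i\<in>J. e i * w i\<bar>" using main D0 by (simp add: abs_mult)
  also have "\<dots> \<le> D0 * (\<Sum>i\<in>J. \<bar>e i\<bar> * K)"
  proof -
    have wK: "\<bar>w i\<bar> \<le> K" if "i \<in> J" for i
    proof -
      have ti: "1 \<le> t i" "t i \<le> b" using t that by auto
      have m1: "v p (t i) \<le> int b" "v q (t i) \<le> int b"
        using mult_le_self[of p "t i"] mult_le_self[of q "t i"] pP qP ti unfolding v_def by auto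
      have m2: "v q b \<le> int b" "v p b \<le> int b"
        using mult_le_self[of p b] mult_le_self[of q b] pP qP b unfolding v_def by auto
      have nn: "0 \<le> v p (t i)" "0 \<le> v q (t i)" "0 \<le> v q b" "0 \<le> v p b" unfolding v_def by auto
      have "v p (t i) * v q b \<le> int b * int b" using m1 m2 nn by (intro mult_mono) auto
      moreover have "v q (t i) * v p b \<le> int b * int b" using m1 m2 nn by (intro mult_mono) auto
      moreover have "0 \<le> v p (t i) * v q b" "0 \<le> v q (t i) * v p b" using nn by auto
      ultimately show ?thesis unfolding w_def K_def by linarith
    qed
    have "\<bar>\<Sum>i\<in>J. e i * w i\<bar> \<le> (\<Sum>i\<in>J. \<bar>e i * w i\<bar>)" by (rule sum_abs)
    also have "\<dots> \<le> (\<Sum>i\<in>J. \<bar>e i\<bar> * K)"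
      by (intro sum_mono) (auto simp: abs_mult intro: mult_left_mono wK)
    finally show ?thesis using D0 by (simp add: mult_left_mono)
  qed
  finally have DK: "D \<le> D0 * K * (\<Sum>i\<in>J. \<bar>e i\<bar>)" by (simp add: sum_distrib_left sum_distrib_right algebra_simps)
  have ei: "(k - l) * \<bar>e i\<bar> \<le> 2 * D" if "i \<in> J" for i
  proof -
    have "k - l \<le> 2 * \<bar>\<Prod>j\<in>J-{i}. (i - j)\<bar>" by (rule Pi_lower[OF J(2) that J(4) J(5) kl])
    then have "(k - l) * \<bar>e i\<bar> \<le> 2 * \<bar>\<Prod>j\<in>J-{i}. (i - j)\<bar> * \<bar>e i\<bar>" by (simp add: mult_right_mono)
    also have "\<dots> = 2 * \<bar>e i * (\<Prod>j\<in>J-{i}. (i - j))\<bar>" by (simp add: abs_mult)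
    also have "\<dots> = 2 * D" using eP that Dp by simp
    finally show ?thesis .
  qed
  have K0: "K \<ge> 0" unfolding K_def by simp
  have "(k - l) * D \<le> D0 * K * ((k - l) * (\<Sum>i\<in>J. \<bar>e i\<bar>))"
    using mult_left_mono[OF DK, of "k - l"] kl by (simp add: algebra_simps)
  also have "(k - l) * (\<Sum>i\<in>J. \<bar>e i\<bar>) \<le> (\<Sum>i\<in>J. 2 * D)"
    unfolding sum_distrib_left by (intro sum_mono ei)
  then have "D0 * K * ((k - l) * (\<Sum>i\<in>J. \<bar>e i\<bar>)) \<le> D0 * K * (\<Sum>i\<in>J. 2 * D)"
    using D0 K0 by (intro mult_left_mono) auto
  also have "(\<Sum>i\<in>J. 2 * D) = (int d + 1) * 2 * D" using J(3) by simp
  finally have "(k - l) * D \<le> (2 * (int d + 1) * D0 * K) * D" by (simp add: algebra_simps)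
  then have "k - l \<le> 2 * (int d + 1) * D0 * K" using Dp by simp
  then show ?thesis unfolding K_def .
qed


theorem mainTheorem8:
  fixes d b :: nat and a :: real
  assumes "d \<ge> 1" and "b \<ge> 5" and "a > 0"
    and "log (real b) a \<notin> \<rat>"
  shows "(\<forall>I :: int set. finite I \<and> card I = d \<longrightarrow>
            finite {x \<in> torus d. I \<subseteq> Ix d (log (real b) a) b x})
       \<and> (\<exists>C :: real. \<forall>x \<in> torus d.
            \<not> (finite (Ix d (log (real b) a) b x) \<and> card (Ix d (log (real b) a) b x) \<le> d) \<longrightarrow>
            (\<forall>k \<in> Ix d (log (real b) a) b x. \<forall>l \<in> Ix d (log (real b) a) b x. real_of_int (k - l) \<le> C))"
proof
  have d: "d \<ge> 1" and b: "b \<ge> 2" and a: "a > 0" using assms by auto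
  show "\<forall>I :: int set. finite I \<and> card I = d \<longrightarrow> finite {x \<in> torus d. I \<subseteq> Ix d (log (real b) a) b x}"
    using partI[OF d] by blast
  show "\<exists>C :: real. \<forall>x \<in> torus d.
            \<not> (finite (Ix d (log (real b) a) b x) \<and> card (Ix d (log (real b) a) b x) \<le> d) \<longrightarrow>
            (\<forall>k \<in> Ix d (log (real b) a) b x. \<forall>l \<in> Ix d (log (real b) a) b x. real_of_int (k - l) \<le> C)"
  proof (cases "\<exists>D0::int. \<exists>c0::nat \<Rightarrow> int. D0 > 0 \<and>
      real_of_int D0 * ln a = (\<Sum>p\<in>{p. prime p \<and> p \<le> b}. real_of_int (c0 p) * ln (real p))")
    case True
    then obtain D0 :: int and c0 :: "nat \<Rightarrow> int" where D0: "D0 > 0"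
      and rel0: "real_of_int D0 * ln a = (\<Sum>p\<in>{p. prime p \<and> p \<le> b}. real_of_int (c0 p) * ln (real p))"
      by blast
    obtain p q where pP: "p \<in> {p. prime p \<and> p \<le> b}" and qP: "q \<in> {p. prime p \<and> p \<le> b}"
      and delta: "c0 p * int (multiplicity q b) \<noteq> c0 q * int (multiplicity p b)"
      using rat_lemma[OF b a D0 rel0] assms(4) by blast
    show ?thesis
    proof (intro exI[of _ "real_of_int (2 * (int d + 1) * D0 * (2 * int b * int b))"] ballI impI)
      fix x k l assume x: "x \<in> torus d"
        and big: "\<not> (finite (Ix d (log (real b) a) b x) \<and> card (Ix d (log (real b) a) b x) \<le> d)"
        and k: "k \<in> Ix d (log (real b) a) b x" and l: "l \<in> Ix d (log (real b) a) b x"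
      show "real_of_int (k - l) \<le> real_of_int (2 * (int d + 1) * D0 * (2 * int b * int b))"
      proof (cases "l < k")
        case True
        show ?thesis using key_bound[OF x d b a D0 rel0 pP qP delta big k l True] by linarith
      next
        case False
        have "0 \<le> 2 * (int d + 1) * D0 * (2 * int b * int b)" using D0 by simp
        then show ?thesis using False by linarith
      qed
    qed
  next
    case False
    show ?thesis
    proof (intro exI[of _ 0] ballI impI)
      fix x k l assume x: "x \<in> torus d"
        and big: "\<not> (finite (Ix d (log (real b) a) b x) \<and> card (Ix d (log (real b) a) b x) \<le> d)"
        and k: "k \<in> Ix d (log (real b) a) b x" and l: "l \<in> Ix d (log (real b) a) b x"
      show "real_of_int (k - l) \<le> 0"
      proof (rule ccontr)
        assume "\<not> real_of_int (k - l) \<le> 0"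
        then have kl: "l < k" by simp
        obtain J where J: "J \<subseteq> Ix d (log (real b) a) b x" "finite J" "card J = Suc d"
          using choose_J[OF d big k l] kl by auto
        obtain D N :: int and e :: "int \<Rightarrow> int" and t :: "int \<Rightarrow> nat" where
          Dp: "D > 0" and t: "\<forall>i\<in>J. t i \<in> {1..b-1}"
          and rel: "real_of_int D * ln a = real_of_int N * ln (real b) + (\<Sum>i\<in>J. real_of_int (e i) * ln (real (t i)))"
          using relation[OF x d b a J] by blast
        have "real_of_int D * ln a = (\<Sum>p\<in>{p. prime p \<and> p \<le> b}. real_of_int ((\<lambda>p. N * int (multiplicity p b) + (\<Sum>i\<in>J. e i * int (multiplicity p (t i)))) p) * ln (real p))"
          using rel_primes[OF b t rel] by simp
        then have "\<exists>D0::int. \<exists>c0::nat \<Rightarrow> int. D0 > 0 \<and>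
            real_of_int D0 * ln a = (\<Sum>p\<in>{p. prime p \<and> p \<le> b}. real_of_int (c0 p) * ln (real p))"
          using Dp by (intro exI[of _ D] exI[of _ "\<lambda>p. N * int (multiplicity p b) + (\<Sum>i\<in>J. e i * int (multiplicity p (t i)))"]) simp
        then show False using False by blast
      qed
    qed
  qed
qed

end
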